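(* Let $\mathcal{A}$ be a two-dimensional pVASS and $S$ a BSCC of $\mathscr{C}_\mathcal{A}$ with $t_S(2)<0$. Let $G\in[0,1]^{S\times S}$ be the matrix where $G[q,r]$ is the probability that a run of $\mathcal{A}_2$ starting in $q(1)$ visits $r(0)$ before visiting any configuration $r'(0)$ with $r'\ne r$. Then the directed graph of $G$ (edge $q\to r$ iff $G[q,r]>0$) has exactly one bottom strongly connected component.
   Context: A pVASS of dimension $d$ is $\mathcal{A}=(Q,\gamma,W)$ ($Q$ finite, rules $\gamma\subseteq Q\times\{-1,0,1\}^d\times Q$, weights $W:\gamma\to\mathbb{N}^+$), with the standing assumption that the graph on $Q$ induced by rules is weakly connected and between two states there is at most one rule. Configurations $p\vec v\in Q\times\mathbb{N}^d$; a rule $(p,\kappa,q)$ is enabled if $\vec v_i>0$ whenever $\kappa_i=-1$; the Markov chain on configurations has a self-loop with probability 1 if no rule is enabled, and otherwise each enabled rule of weight $\ell$ gives $p\vec v\to q(\vec v+\kappa)$ with probability $\ell/T$, $T$ total enabled weight. $\mathscr{C}_\mathcal{A}$: finite Markov chain on $Q$ with $p\to q$ with probability $W((p,\kappa,q))/T_p$ ($T_p$ total weight of rules from $p$); BSCC = bottom strongly connected component; for a BSCC $S$, $\mu_S$ is its invariant distribution and the trend is $t_S=\sum_{s\in S}\mu_S(s)\sum_{(s,\kappa,t)\in\gamma}\kappa W((s,\kappa,t))/T_s$. $\mathcal{A}_2$ is the one-dimensional pVASS with a rule $(s,\kappa(2),t)$ of weight $\ell$ for each rule $(s,\kappa,t)$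 of weight $\ell$ of $\mathcal{A}$ (configurations $q(k)$, $k\in\mathbb{N}$). (Because $t_S(2)<0$, $G$ is stochastic.) *)

theory Defs
  imports Complex_Main
begin

text \<open>Probabilistic VASS. Counter vectors and update vectors are functions on nat;
  only the components 1..dim are meaningful (update vectors are 0 elsewhere).\<close>

record 'q pvass =
  states :: "'q set"
  rules  :: "('q \<times> (nat \<Rightarrow> int) \<times> 'q) set"
  weight :: "('q \<times> (nat \<Rightarrow> int) \<times> 'q) \<Rightarrow> nat"
  dim    :: nat

definition rule_edges :: "'q pvass \<Rightarrow> ('q \<times> 'q) set" where
  "rule_edges A = {(p, q). \<exists>\<kappa>. (p, \<kappa>, q) \<in> rules A}"

definition wf_pvass :: "'q pvass \<Rightarrow> bool" where
  "wf_pvass A \<longleftrightarrow>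
     finite (states A) \<and> states A \<noteq> {} \<and>
     (\<forall>(p, \<kappa>, q) \<in> rules A. p \<in> states A \<and> q \<in> states A \<and>
        (\<forall>i. (i \<in> {1..dim A} \<longrightarrow> \<kappa> i \<in> {-1, 0, 1}) \<and> (i \<notin> {1..dim A} \<longrightarrow> \<kappa> i = 0))) \<and>
     (\<forall>\<rho> \<in> rules A. weight A \<rho> > 0) \<and>
     (\<forall>p \<in> states A. \<forall>q \<in> states A. (p, q) \<in> (rule_edges A \<union> (rule_edges A)\<inverse>)\<^sup>*) \<and>
     (\<forall>p \<kappa> \<kappa>' q. (p, \<kappa>, q) \<in> rules A \<longrightarrow> (p, \<kappa>', q) \<in> rules A \<longrightarrow> \<kappa> = \<kappa>')"

definition is_bscc :: "'a set \<Rightarrow> ('a \<times> 'a) set \<Rightarrow> 'a set \<Rightarrow> bool" where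
  "is_bscc V E C \<longleftrightarrow> C \<noteq> {} \<and> C \<subseteq> V \<and>
     (\<forall>x \<in> C. \<forall>y \<in> C. (x, y) \<in> (E \<inter> (V \<times> V))\<^sup>*) \<and>
     (\<forall>x \<in> C. \<forall>y \<in> V. (x, y) \<in> E \<longrightarrow> y \<in> C)"

definition out_weight :: "'q pvass \<Rightarrow> 'q \<Rightarrow> real" where
  "out_weight A p = (\<Sum>\<rho> \<in> {\<rho> \<in> rules A. fst \<rho> = p}. real (weight A \<rho>))"

definition CA_prob :: "'q pvass \<Rightarrow> 'q \<Rightarrow> 'q \<Rightarrow> real" where
  "CA_prob A p q = (\<Sum>\<rho> \<in> {\<rho> \<in> rules A. fst \<rho> = p \<and> snd (snd \<rho>) = q}. real (weight A \<rho>))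
                    / out_weight A p"

definition is_bscc_CA :: "'q pvass \<Rightarrow> 'q set \<Rightarrow> bool" where
  "is_bscc_CA A S \<longleftrightarrow> is_bscc (states A) {(p, q). CA_prob A p q > 0} S"

definition invariant_dist :: "'q pvass \<Rightarrow> 'q set \<Rightarrow> ('q \<Rightarrow> real) \<Rightarrow> bool" where
  "invariant_dist A S \<mu> \<longleftrightarrow> (\<forall>s. s \<notin> S \<longrightarrow> \<mu> s = 0) \<and> (\<forall>s \<in> S. \<mu> s \<ge> 0) \<and>
     (\<Sum>s \<in> S. \<mu> s) = 1 \<and> (\<forall>s \<in> S. \<mu> s = (\<Sum>s' \<in> S. \<mu> s' * CA_prob A s' s))"

definition mu_S :: "'q pvass \<Rightarrow> 'q set \<Rightarrow> 'q \<Rightarrow> real" where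
  "mu_S A S = (THE \<mu>. invariant_dist A S \<mu>)"

definition trend :: "'q pvass \<Rightarrow> 'q set \<Rightarrow> nat \<Rightarrow> real" where
  "trend A S i = (\<Sum>s \<in> S. mu_S A S s *
      (\<Sum>\<rho> \<in> {\<rho> \<in> rules A. fst \<rho> = s}. real_of_int (fst (snd \<rho>) i) * real (weight A \<rho>) / out_weight A s))"

type_synonym 'q config = "'q \<times> (nat \<Rightarrow> nat)"

definition enabled :: "'q pvass \<Rightarrow> 'q config \<Rightarrow> ('q \<times> (nat \<Rightarrow> int) \<times> 'q) set" where
  "enabled A c = {\<rho> \<in> rules A. fst \<rho> = fst c \<and> (\<forall>i. fst (snd \<rho>) i = -1 \<longrightarrow> snd c i > 0)}"

definition apply_rule :: "('q \<times> (nat \<Rightarrow> int) \<times> 'q) \<Rightarrow> 'q config \<Rightarrow> 'q config" where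
  "apply_rule \<rho> c = (snd (snd \<rho>), \<lambda>i. nat (int (snd c i) + fst (snd \<rho>) i))"

definition enabled_weight :: "'q pvass \<Rightarrow> 'q config \<Rightarrow> real" where
  "enabled_weight A c = (\<Sum>\<rho> \<in> enabled A c. real (weight A \<rho>))"

fun reach_within :: "'q pvass \<Rightarrow> 'q config set \<Rightarrow> 'q config set \<Rightarrow> nat \<Rightarrow> 'q config \<Rightarrow> real" where
  "reach_within A T B 0 c = (if c \<in> T then 1 else 0)"
| "reach_within A T B (Suc n) c =
     (if c \<in> T then 1 else if c \<in> B then 0
      else if enabled A c = {} then reach_within A T B n c
      else (\<Sum>\<rho> \<in> enabled A c. real (weight A \<rho>) / enabled_weight A c
               * reach_within A T B n (apply_rule \<rho> c)))"

text \<open>Probability that a run from c visits T before visiting B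
  (limit of the step-bounded probabilities, by continuity of measure).\<close>
definition reach_before :: "'q pvass \<Rightarrow> 'q config set \<Rightarrow> 'q config set \<Rightarrow> 'q config \<Rightarrow> real" where
  "reach_before A T B c = (SUP n. reach_within A T B n c)"

definition proj2 :: "'q pvass \<Rightarrow> 'q pvass" where
  "proj2 A = \<lparr> states = states A,
     rules = {(s, (\<lambda>_. 0)(1 := \<kappa> 2), t) | s \<kappa> t. (s, \<kappa>, t) \<in> rules A},
     weight = (\<lambda>(s, _, t). weight A (THE \<rho>. \<rho> \<in> rules A \<and> fst \<rho> = s \<and> snd (snd \<rho>) = t)),
     dim = 1 \<rparr>"

definition cfg1 :: "'q \<Rightarrow> nat \<Rightarrow> 'q config" where
  "cfg1 q k = (q, (\<lambda>_. 0)(1 := k))"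

definition Gmat :: "'q pvass \<Rightarrow> 'q set \<Rightarrow> 'q \<Rightarrow> 'q \<Rightarrow> real" where
  "Gmat A S q r = reach_before (proj2 A) {cfg1 r 0} {cfg1 r' 0 | r'. r' \<noteq> r} (cfg1 q 1)"

end

theory Submission
  imports Defs "Jordan_Normal_Form.Determinant"
begin
lemma exists_left_fix:
  fixes P :: "'q \<Rightarrow> 'q \<Rightarrow> real" and S :: "'q set"
  assumes fin: "finite S" and ne: "S \<noteq> {}" and rows: "\<And>s. s \<in> S \<Longrightarrow> (\<Sum>t\<in>S. P s t) = 1"
  shows "\<exists>x. (\<exists>s\<in>S. x s \<noteq> 0) \<and> (\<forall>t\<in>S. x t = (\<Sum>s\<in>S. x s * P s t))"
proof -
  obtain xs where xs: "set xs = S" "distinct xs" using finite_distinct_list[OF fin] by blast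
  define n where "n = length xs"
  have bij: "bij_betw ((!) xs) {..<n} S"
    using xs unfolding n_def by (simp add: bij_betw_nth)
  have reidx: "(\<Sum>j<n. f (xs ! j)) = (\<Sum>s\<in>S. f s)" for f :: "'q \<Rightarrow> real"
    using sum.reindex_bij_betw[OF bij, of f] by simp
  define M where "M = mat n n (\<lambda>(i,j). P (xs!i) (xs!j) - (if i = j then 1 else 0))"
  have M: "M \<in> carrier_mat n n" unfolding M_def by simp
  have "M *\<^sub>v vec n (\<lambda>_. 1) = 0\<^sub>v n"
  proof (rule eq_vecI)
    fix i assume i: "i < dim_vec (0\<^sub>v n :: real vec)"
    hence i': "i < n" by simp
    have "(M *\<^sub>v vec n (\<lambda>_. 1)) $ i = (\<Sum>j<n. P (xs!i) (xs!j) - (if i = j then 1 else 0))"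
      using i' unfolding M_def by (auto intro!: sum.cong simp: lessThan_atLeast0 scalar_prod_def)
    also have "\<dots> = (\<Sum>j<n. P (xs!i) (xs!j)) - 1"
      using i' by (simp add: sum_subtractf)
    also have "\<dots> = 0" using reidx[of "P (xs!i)"] rows[of "xs!i"] i' xs unfolding n_def by auto
    finally show "(M *\<^sub>v vec n (\<lambda>_. 1)) $ i = 0\<^sub>v n $ i" using i' by simp
  qed (simp add: M_def)
  moreover have "vec n (\<lambda>_. 1) \<noteq> (0\<^sub>v n :: real vec)" if "n > 0"
    using that by (metis index_vec index_zero_vec(1) zero_neq_one)
  moreover have "n > 0" using xs ne unfolding n_def by auto
  ultimately have "det M = 0" using det_0_iff_vec_prod_zero_field[OF M] by (meson vec_carrier)
  hence "det (transpose_mat M) = 0" using det_transpose[OF M] by simp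
  then obtain v where v: "v \<in> carrier_vec n" "v \<noteq> 0\<^sub>v n" "transpose_mat M *\<^sub>v v = 0\<^sub>v n"
    using det_0_iff_vec_prod_zero_field[of "transpose_mat M" n] M by auto
  define idx where "idx = the_inv_into {..<n} ((!) xs)"
  have idx1: "idx t < n" "xs ! idx t = t" if "t \<in> S" for t
    using that bij unfolding idx_def
    by (auto simp: bij_betw_def the_inv_into_f_f f_the_inv_into_f)
  have idx2: "idx (xs ! j) = j" if "j < n" for j
    using that bij unfolding idx_def by (auto simp: bij_betw_def the_inv_into_f_f)
  define x where "x = (\<lambda>s::'q. v $ (idx s))"
  show ?thesis
  proof (intro exI conjI ballI)
    from v(1,2) obtain i where i: "i < n" "v $ i \<noteq> 0" by (metis carrier_vecD eq_vecI index_zero_vec)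
    show "\<exists>s\<in>S. x s \<noteq> 0"
      using i xs idx2 unfolding x_def n_def by (intro bexI[of _ "xs!i"]) auto
  next
    fix t assume t: "t \<in> S"
    define i where "i = idx t"
    have i: "i < n" "xs ! i = t" using t idx1 unfolding i_def by auto
    have "0 = (transpose_mat M *\<^sub>v v) $ i" using v(3) i by simp
    also have "\<dots> = (\<Sum>j<n. (P (xs!j) (xs!i) - (if j = i then 1 else 0)) * v $ j)"
      using i v(1) unfolding M_def by (auto intro!: sum.cong simp: lessThan_atLeast0 scalar_prod_def)
    also have "\<dots> = (\<Sum>j<n. P (xs!j) (xs!i) * v $ j) - (\<Sum>j<n. (if j = i then 1 else 0) * v $ j)"
      by (simp only: left_diff_distrib sum_subtractf)
    also have "\<dots> = (\<Sum>j<n. P (xs!j) (xs!i) * v $ j) - v $ i"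
    proof -
      have "(\<Sum>j<n. (if j = i then 1 else 0) * v $ j) = (\<Sum>j<n. if j = i then v $ j else 0)"
        by (intro sum.cong) auto
      also have "\<dots> = v $ i" using i by simp
      finally show ?thesis by simp
    qed
    finally have "v $ i = (\<Sum>j<n. v $ j * P (xs!j) t)" using i by (simp add: mult.commute)
    also have "\<dots> = (\<Sum>j<n. x (xs!j) * P (xs!j) t)"
      using idx2 unfolding x_def by (intro sum.cong) auto
    also have "\<dots> = (\<Sum>s\<in>S. x s * P s t)" by (rule reidx)
    finally show "x t = (\<Sum>s\<in>S. x s * P s t)" unfolding x_def i_def .
  qed
qed

locale pv =
  fixes A :: "'q pvass" and S :: "'q set"
  assumes wf: "wf_pvass A" and d2: "dim A = 2" and bscc: "is_bscc_CA A S"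
begin

lemma kappa2: "(q, \<kappa>, p) \<in> rules A \<Longrightarrow> \<kappa> 2 \<in> {-1, 0, 1}"
  using wf d2 unfolding wf_pvass_def by fastforce

inductive Wn :: "int \<Rightarrow> 'q \<Rightarrow> int \<Rightarrow> nat \<Rightarrow> 'q \<Rightarrow> int \<Rightarrow> bool" where
  refl: "Wn c q h 0 q h"
| step: "(q, \<kappa>, p) \<in> rules A \<Longrightarrow> q \<in> S \<Longrightarrow> h \<ge> c \<Longrightarrow> Wn c p (h + \<kappa> 2) n r h'
         \<Longrightarrow> Wn c q h (Suc n) r h'"

lemma Wn_shift: "Wn c q h n r h' \<Longrightarrow> Wn (c + d) q (h + d) n r (h' + d)"
proof (induction rule: Wn.induct)
  case (refl c q h) then show ?case by (rule Wn.refl)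
next
  case (step q \<kappa> p h c n r h')
  then show ?case by (intro Wn.step[of q \<kappa> p]) (auto simp: algebra_simps)
qed

lemma Wn_mono: "Wn c q h n r h' \<Longrightarrow> c' \<le> c \<Longrightarrow> Wn c' q h n r h'"
  by (induction rule: Wn.induct) (auto intro: Wn.intros)

lemma Wn_trans: "Wn c q h n r h' \<Longrightarrow> Wn c r h' m s h'' \<Longrightarrow> Wn c q h (n + m) s h''"
  by (induction rule: Wn.induct) (auto intro: Wn.intros)

lemma Wn_snoc: "Wn c q h n r h' \<Longrightarrow> (r, \<kappa>, p) \<in> rules A \<Longrightarrow> r \<in> S \<Longrightarrow> h' \<ge> c
   \<Longrightarrow> Wn c q h (Suc n) p (h' + \<kappa> 2)"
  using Wn_trans[of c q h n r h' 1 p "h' + \<kappa> 2"] by (auto intro: Wn.intros)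

lemma Wn_nonneg: "Wn c q h n r h' \<Longrightarrow> c = 1 \<Longrightarrow> h \<ge> 0 \<Longrightarrow> h' \<ge> 0"
proof (induction rule: Wn.induct)
  case (step q \<kappa> p h c n r h')
  then show ?case using kappa2[OF step(1)] by auto
qed simp

lemma first_passage:
  "Wn c q h n r h' \<Longrightarrow> h' < h \<Longrightarrow>
     \<exists>p n1 n2. Wn h q h n1 p (h - 1) \<and> Wn c p (h - 1) n2 r h' \<and> n1 + n2 = n"
proof (induction n arbitrary: q h rule: less_induct)
  case (less n)
  from less.prems(1) show ?case
  proof cases
    case refl then show ?thesis using less.prems(2) by simp
  next
    case (step \<kappa> p1 m)
    note st = step
    have k: "\<kappa> 2 \<in> {-1, 0, 1}" using kappa2[OF st(2)] .
    consider "\<kappa> 2 = -1" | "\<kappa> 2 = 0" | "\<kappa> 2 = 1" using k by auto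
    then show ?thesis
    proof cases
      case 1
      have "Wn h q h 1 p1 (h - 1)"
        using Wn.step[OF st(2) st(3), of h h 0 p1 "h - 1"] 1 by (auto intro: Wn.refl)
      then show ?thesis using st 1 by (intro exI[of _ p1] exI[of _ 1] exI[of _ m]) auto
    next
      case 2
      obtain p n1 n2 where p: "Wn h p1 h n1 p (h - 1)" "Wn c p (h - 1) n2 r h'" "n1 + n2 = m"
        using less.IH[of m p1 h] st 2 less.prems(2) by auto
      have "Wn h q h (Suc n1) p (h - 1)"
        using Wn.step[OF st(2) st(3), of h h n1 p "h - 1"] 2 p(1) by auto
      then show ?thesis using p st by (intro exI[of _ p] exI[of _ "Suc n1"] exI[of _ n2]) auto
    next
      case 3
      obtain p' a1 a2 where p': "Wn (h + 1) p1 (h + 1) a1 p' h" "Wn c p' h a2 r h'" "a1 + a2 = m"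
        using less.IH[of m p1 "h + 1"] st 3 less.prems(2) by auto
      obtain p b1 b2 where p: "Wn h p' h b1 p (h - 1)" "Wn c p (h - 1) b2 r h'" "b1 + b2 = a2"
        using less.IH[of a2 p' h] p' st less.prems(2) by auto
      have "Wn h p1 (h + 1) a1 p' h" using Wn_mono[OF p'(1)] by simp
      hence "Wn h p1 (h + 1) (a1 + b1) p (h - 1)" using Wn_trans p(1) by blast
      hence "Wn h q h (Suc (a1 + b1)) p (h - 1)"
        using Wn.step[OF st(2) st(3), of h h] 3 by auto
      then show ?thesis using p p' st by (intro exI[of _ p] exI[of _ "Suc (a1 + b1)"] exI[of _ b2]) auto
    qed
  qed
qed

definition Eg :: "('q \<times> 'q) set" where
  "Eg = {(q, r). \<exists>n. Wn 1 q 1 n r 0}"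

lemma Wn_zero_floor1: "Wn 1 p 0 n r 0 \<Longrightarrow> p = r"
  by (erule Wn.cases) auto

lemma descent_nat: "Wn 1 q (int k + 1) n r 0 \<Longrightarrow> (q, r) \<in> Eg\<^sup>*"
proof (induction k arbitrary: q n)
  case (0 q n)
  then show ?case unfolding Eg_def by auto
next
  case (Suc k q n)
  obtain p n1 n2 where p: "Wn (int (Suc k) + 1) q (int (Suc k) + 1) n1 p (int (Suc k))"
    "Wn 1 p (int (Suc k)) n2 r 0"
    using first_passage[OF Suc.prems] by auto
  have "Wn (int (Suc k) + 1 + (- int (Suc k))) q (int (Suc k) + 1 + (- int (Suc k))) n1 p (int (Suc k) + (- int (Suc k)))"
    by (rule Wn_shift[OF p(1)])
  hence "(q, p) \<in> Eg" unfolding Eg_def by auto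
  moreover have "(p, r) \<in> Eg\<^sup>*" using Suc.IH[of p n2] p(2) by (simp add: add.commute)
  ultimately show ?case by simp
qed

lemma descent: "Wn 1 q h n r 0 \<Longrightarrow> h \<ge> 1 \<Longrightarrow> (q, r) \<in> Eg\<^sup>*"
  using descent_nat[of q "nat (h - 1)" n r] by simp

end

context pv begin

lemma finite_states: "finite (states A)" using wf unfolding wf_pvass_def by auto

lemma rule_states: "(p, \<kappa>, q) \<in> rules A \<Longrightarrow> p \<in> states A \<and> q \<in> states A"
  using wf unfolding wf_pvass_def by fastforce

lemma weight_pos: "\<rho> \<in> rules A \<Longrightarrow> weight A \<rho> > 0"
  using wf unfolding wf_pvass_def by auto

lemma rule_unique: "(p, \<kappa>, q) \<in> rules A \<Longrightarrow> (p, \<kappa>', q) \<in> rules A \<Longrightarrow> \<kappa> = \<kappa>'"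
  using wf unfolding wf_pvass_def by blast

lemma finite_rules: "finite (rules A)"
proof -
  have "inj_on (\<lambda>\<rho>. (fst \<rho>, snd (snd \<rho>))) (rules A)"
    by (auto simp: inj_on_def dest: rule_unique)
  moreover have "(\<lambda>\<rho>. (fst \<rho>, snd (snd \<rho>))) ` rules A \<subseteq> states A \<times> states A"
    using rule_states by fastforce
  ultimately show ?thesis
    using finite_states by (meson finite_SigmaI finite_imageD finite_subset)
qed

lemma S_props: "S \<noteq> {}" "S \<subseteq> states A"
  "\<And>x y. x \<in> S \<Longrightarrow> y \<in> S \<Longrightarrow> (x, y) \<in> ({(p, q). CA_prob A p q > 0} \<inter> (states A \<times> states A))\<^sup>*"
  "\<And>x y. x \<in> S \<Longrightarrow> y \<in> states A \<Longrightarrow> CA_prob A x y > 0 \<Longrightarrow> y \<in> S"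
  using bscc unfolding is_bscc_CA_def is_bscc_def by auto

lemma finite_S: "finite S" using S_props(2) finite_states finite_subset by blast

lemma CA_prob_pos: "(s, \<kappa>, t) \<in> rules A \<Longrightarrow> CA_prob A s t > 0"
proof -
  assume r: "(s, \<kappa>, t) \<in> rules A"
  let ?Rst = "{\<rho> \<in> rules A. fst \<rho> = s \<and> snd (snd \<rho>) = t}"
  let ?Rs = "{\<rho> \<in> rules A. fst \<rho> = s}"
  have f1: "finite ?Rst" "finite ?Rs" using finite_rules by auto
  have "real (weight A (s, \<kappa>, t)) \<le> (\<Sum>\<rho>\<in>?Rst. real (weight A \<rho>))"
    using r f1 by (intro member_le_sum) auto
  moreover have "real (weight A (s, \<kappa>, t)) > 0" using weight_pos[OF r] by simp
  moreover have "(\<Sum>\<rho>\<in>?Rst. real (weight A \<rho>)) \<le> out_weight A s"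
    unfolding out_weight_def using f1 by (intro sum_mono2) auto
  ultimately show ?thesis unfolding CA_prob_def by auto
qed

lemma CA_prob_rule: "CA_prob A s t \<noteq> 0 \<Longrightarrow> \<exists>\<kappa>. (s, \<kappa>, t) \<in> rules A"
proof (rule ccontr)
  assume "CA_prob A s t \<noteq> 0" "\<nexists>\<kappa>. (s, \<kappa>, t) \<in> rules A"
  hence "{\<rho> \<in> rules A. fst \<rho> = s \<and> snd (snd \<rho>) = t} = {}" by auto
  hence "CA_prob A s t = 0" unfolding CA_prob_def by (simp only: sum.empty)
  thus False using \<open>CA_prob A s t \<noteq> 0\<close> by simp
qed

lemma closed: "s \<in> S \<Longrightarrow> (s, \<kappa>, t) \<in> rules A \<Longrightarrow> t \<in> S"
  using S_props(4) rule_states CA_prob_pos by blast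

lemma Wn_S: "Wn c q h n r h' \<Longrightarrow> q \<in> S \<Longrightarrow> r \<in> S"
  by (induction rule: Wn.induct) (auto dest: closed)

definition R :: "('q \<times> 'q) set" where
  "R = {(q, p). q \<in> S \<and> (\<exists>\<kappa>. (q, \<kappa>, p) \<in> rules A)}"

lemma conn: "x \<in> S \<Longrightarrow> y \<in> S \<Longrightarrow> (x, y) \<in> R\<^sup>*"
proof -
  assume x: "x \<in> S" and y: "y \<in> S"
  have "(x, y) \<in> ({(p, q). CA_prob A p q > 0} \<inter> (states A \<times> states A))\<^sup>*"
    using S_props(3) x y by blast
  hence "(x, y) \<in> R\<^sup>* \<and> y \<in> S"
  proof (induction rule: rtrancl_induct)
    case base then show ?case using x by simp
  next
    case (step y z)
    hence "z \<in> S" using S_props(4) by blast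
    moreover obtain \<kappa> where "(y, \<kappa>, z) \<in> rules A" using step CA_prob_rule by force
    ultimately have "(y, z) \<in> R" using step unfolding R_def by blast
    thus ?case using step \<open>z \<in> S\<close> by (meson rtrancl.rtrancl_into_rtrancl)
  qed
  thus ?thesis by simp
qed

lemma path_walk: "(q, r) \<in> R\<^sup>* \<Longrightarrow> \<exists>n d. d \<ge> - int n \<and> (\<forall>h. h \<ge> int n + 1 \<longrightarrow> Wn 1 q h n r (h + d))"
proof (induction rule: converse_rtrancl_induct)
  case base
  show ?case by (intro exI[of _ 0] exI[of _ 0]) (auto intro: Wn.refl)
next
  case (step q p)
  then obtain n d where nd: "d \<ge> - int n" "\<forall>h. h \<ge> int n + 1 \<longrightarrow> Wn 1 p h n r (h + d)" by blast
  from step(1) obtain \<kappa> where k: "q \<in> S" "(q, \<kappa>, p) \<in> rules A" unfolding R_def by auto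
  have k2: "\<kappa> 2 \<in> {-1, 0, 1}" using kappa2[OF k(2)] .
  show ?case
  proof (intro exI[of _ "Suc n"] exI[of _ "d + \<kappa> 2"] conjI allI impI)
    show "d + \<kappa> 2 \<ge> - int (Suc n)" using nd k2 by auto
    fix h assume h: "h \<ge> int (Suc n) + 1"
    have "Wn 1 p (h + \<kappa> 2) n r (h + \<kappa> 2 + d)" using nd(2) h k2 by auto
    thus "Wn 1 q h (Suc n) r (h + (d + \<kappa> 2))"
      using Wn.step[OF k(2) k(1), of 1 h n r] h by (simp add: algebra_simps)
  qed
qed

lemma Z_all:
  assumes Z1: "\<forall>q\<in>S. \<exists>n r. Wn 1 q 1 n r 0"
  shows "q \<in> S \<Longrightarrow> \<exists>n r. Wn 1 q (int k + 1) n r 0"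
proof (induction k arbitrary: q)
  case 0 then show ?case using Z1 by simp
next
  case (Suc k q)
  obtain n p where p: "Wn 1 q 1 n p 0" using Z1 Suc.prems by blast
  have "Wn (1 + int (Suc k)) q (1 + int (Suc k)) n p (0 + int (Suc k))" by (rule Wn_shift[OF p])
  hence p2: "Wn 1 q (int (Suc k) + 1) n p (int k + 1)" by (auto intro: Wn_mono simp: add.commute)
  have "p \<in> S" using Wn_S[OF p Suc.prems] .
  then obtain m r where "Wn 1 p (int k + 1) m r 0" using Suc.IH by blast
  thus ?case using Wn_trans[OF p2] by blast
qed

end

lemma rw_nonneg: "reach_within B T Bs n c \<ge> 0"
  by (induction n arbitrary: c) (auto intro!: sum_nonneg mult_nonneg_nonneg simp: enabled_weight_def sum_nonneg)

lemma rw_le1: "reach_within B T Bs n c \<le> 1"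
proof (induction n arbitrary: c)
  case 0 then show ?case by simp
next
  case (Suc n c)
  let ?E = "enabled B c" and ?w = "enabled_weight B c"
  have "(\<Sum>\<rho>\<in>?E. real (weight B \<rho>) / ?w * reach_within B T Bs n (apply_rule \<rho> c))
        \<le> (\<Sum>\<rho>\<in>?E. real (weight B \<rho>) / ?w * 1)"
    using Suc.IH by (intro sum_mono mult_left_mono) (auto simp: enabled_weight_def sum_nonneg)
  also have "\<dots> = (\<Sum>\<rho>\<in>?E. real (weight B \<rho>)) / ?w" by (simp add: sum_divide_distrib)
  also have "\<dots> \<le> 1" unfolding enabled_weight_def by (cases "(\<Sum>\<rho>\<in>?E. real (weight B \<rho>)) = 0") auto
  finally show ?case using Suc.IH by auto
qed

lemma rw_le_rb: "reach_within B T Bs n c \<le> reach_before B T Bs c"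
  unfolding reach_before_def
  by (rule cSUP_upper) (auto intro!: bdd_aboveI[of _ 1] simp: rw_le1)

context pv begin

lemma rules2: "rules (proj2 A) = (\<lambda>(s, \<kappa>, t). (s, (\<lambda>_. 0)(1 := \<kappa> 2), t)) ` rules A"
  unfolding proj2_def by force

lemma finite_rules2: "finite (rules (proj2 A))"
  unfolding rules2 using finite_rules by simp

lemma weight2: "(q, \<kappa>, p) \<in> rules A \<Longrightarrow> weight (proj2 A) (q, \<kappa>', p) = weight A (q, \<kappa>, p)"
proof -
  assume r: "(q, \<kappa>, p) \<in> rules A"
  have "(THE \<rho>. \<rho> \<in> rules A \<and> fst \<rho> = q \<and> snd (snd \<rho>) = p) = (q, \<kappa>, p)"
    using r by (rule_tac the_equality) (auto dest: rule_unique)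
  thus ?thesis unfolding proj2_def by simp
qed

lemma cfg1_eq: "cfg1 q k = cfg1 r k' \<Longrightarrow> k = k'"
  unfolding cfg1_def by (metis fun_upd_same snd_conv)

lemma walk_rw: "Wn c q h n r h' \<Longrightarrow> c = 1 \<Longrightarrow> h' = 0 \<Longrightarrow> h \<ge> 0 \<Longrightarrow>
   reach_within (proj2 A) {cfg1 r 0} {cfg1 r' 0 | r'. r' \<noteq> r} n (cfg1 q (nat h)) > 0"
proof (induction rule: Wn.induct)
  case (refl c q h) then show ?case by simp
next
  case (step q \<kappa> p h c n r h')
  let ?T = "{cfg1 r 0}" and ?B = "{cfg1 r' 0 | r'. r' \<noteq> r}"
  let ?c = "cfg1 q (nat h)" and ?A2 = "proj2 A"
  define \<rho>2 where "\<rho>2 = (q, (\<lambda>_::nat. 0::int)(1 := \<kappa> 2), p)"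
  have h1: "h \<ge> 1" using step by simp
  have k2: "\<kappa> 2 \<in> {-1, 0, 1}" using kappa2[OF step(1)] .
  have nT: "?c \<notin> ?T" "?c \<notin> ?B" using h1 by (auto dest: cfg1_eq)
  have in2: "\<rho>2 \<in> enabled ?A2 ?c"
    unfolding enabled_def \<rho>2_def using step(1) h1
    by (auto simp: rules2 cfg1_def intro!: image_eqI[of _ _ "(q, \<kappa>, p)"])
  have finE: "finite (enabled ?A2 ?c)"
    using finite_rules2 unfolding enabled_def by simp
  have w: "real (weight ?A2 \<rho>2) > 0"
    unfolding \<rho>2_def using weight2[OF step(1)] weight_pos[OF step(1)] by simp
  have ew: "enabled_weight ?A2 ?c > 0"
  proof -
    have "real (weight ?A2 \<rho>2) \<le> enabled_weight ?A2 ?c"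
      unfolding enabled_weight_def using finE in2 by (intro member_le_sum) auto
    thus ?thesis using w by simp
  qed
  have app: "apply_rule \<rho>2 ?c = cfg1 p (nat (h + \<kappa> 2))"
    unfolding apply_rule_def \<rho>2_def cfg1_def using h1 by (auto simp: fun_eq_iff)
  have pos: "reach_within ?A2 ?T ?B n (apply_rule \<rho>2 ?c) > 0"
    unfolding app using step k2 h1 by auto
  have "reach_within ?A2 ?T ?B (Suc n) ?c =
     (\<Sum>\<rho> \<in> enabled ?A2 ?c. real (weight ?A2 \<rho>) / enabled_weight ?A2 ?c
               * reach_within ?A2 ?T ?B n (apply_rule \<rho> ?c))"
    using nT in2 by (simp del: reach_within.simps(1) add: reach_within.simps(2)[of _ _ _ n] ) (auto)
  also have "\<dots> > 0"
    using finE in2 w ew pos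
    apply (intro sum_pos2[of _ \<rho>2])
    apply simp_all
    subgoal for i
      apply (rule divide_nonneg_pos)
       apply (rule mult_nonneg_nonneg)
      apply simp
      apply (rule rw_nonneg)
      apply simp
      done
    done
  finally show ?case .
qed

lemma Eg_G: "(q, r) \<in> Eg \<Longrightarrow> Gmat A S q r > 0"
proof -
  assume "(q, r) \<in> Eg"
  then obtain n where "Wn 1 q 1 n r 0" unfolding Eg_def by auto
  from walk_rw[OF this] have "reach_within (proj2 A) {cfg1 r 0} {cfg1 r' 0 | r'. r' \<noteq> r} n (cfg1 q 1) > 0"
    by simp
  thus ?thesis unfolding Gmat_def using rw_le_rb by (meson less_le_trans)
qed

end

locale pv2 = pv +
  assumes two: "\<exists>s\<in>S. \<exists>t\<in>S. s \<noteq> t"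
begin

abbreviation "P \<equiv> CA_prob A"
abbreviation "Rs s \<equiv> {\<rho> \<in> rules A. fst \<rho> = s}"

lemma has_out: "s \<in> S \<Longrightarrow> \<exists>\<kappa> t. (s, \<kappa>, t) \<in> rules A"
proof -
  assume s: "s \<in> S"
  obtain t where t: "t \<in> S" "t \<noteq> s" using two by blast
  have "(s, t) \<in> R\<^sup>*" using conn s t by simp
  then obtain y where "(s, y) \<in> R" using t(2) by (metis converse_rtranclE)
  thus ?thesis unfolding R_def by auto
qed

lemma out_pos: "s \<in> S \<Longrightarrow> out_weight A s > 0"
proof -
  assume s: "s \<in> S"
  obtain \<kappa> t where r: "(s, \<kappa>, t) \<in> rules A" using has_out[OF s] by blast
  have "real (weight A (s, \<kappa>, t)) \<le> out_weight A s"
    unfolding out_weight_def using finite_rules r by (intro member_le_sum) auto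
  thus ?thesis using weight_pos[OF r] by simp
qed

lemma P_nonneg: "P s t \<ge> 0"
  unfolding CA_prob_def out_weight_def by (auto intro!: divide_nonneg_nonneg sum_nonneg)

lemma group_targets:
  assumes s: "s \<in> S"
  shows "(\<Sum>\<rho>\<in>Rs s. f (snd (snd \<rho>)) * real (weight A \<rho>) / out_weight A s) = (\<Sum>t\<in>S. f t * P s t)"
proof -
  have fR: "finite (Rs s)" using finite_rules by simp
  have img: "(\<lambda>\<rho>. snd (snd \<rho>)) ` Rs s \<subseteq> S" using closed s by force
  define g where "g \<rho> = f (snd (snd \<rho>)) * real (weight A \<rho>) / out_weight A s" for \<rho>
  have grp: "(\<Sum>t\<in>S. sum g {x. x \<in> Rs s \<and> snd (snd x) = t}) = sum g (Rs s)"
    by (rule sum.group[OF fR finite_S img])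
  have sets: "{x. x \<in> Rs s \<and> snd (snd x) = t} = {\<rho> \<in> rules A. fst \<rho> = s \<and> snd (snd \<rho>) = t}" for t
    by auto
  have "(\<Sum>\<rho>\<in>Rs s. f (snd (snd \<rho>)) * real (weight A \<rho>) / out_weight A s)
      = (\<Sum>t\<in>S. \<Sum>\<rho>\<in>{x. x \<in> Rs s \<and> snd (snd x) = t}. f (snd (snd \<rho>)) * real (weight A \<rho>) / out_weight A s)"
    using grp unfolding g_def by simp
  also have "\<dots> = (\<Sum>t\<in>S. f t * P s t)"
  proof (rule sum.cong)
    fix t assume "t \<in> S"
    have "(\<Sum>\<rho>\<in>{x. x \<in> Rs s \<and> snd (snd x) = t}. f (snd (snd \<rho>)) * real (weight A \<rho>) / out_weight A s)
        = (\<Sum>\<rho>\<in>{\<rho> \<in> rules A. fst \<rho> = s \<and> snd (snd \<rho>) = t}. f t * real (weight A \<rho>) / out_weight A s)"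
      by (intro sum.cong) auto
    also have "\<dots> = f t * P s t" unfolding CA_prob_def
      by (simp add: sum_distrib_left sum_divide_distrib)
    finally show "(\<Sum>\<rho>\<in>{x. x \<in> Rs s \<and> snd (snd x) = t}. f (snd (snd \<rho>)) * real (weight A \<rho>) / out_weight A s) = f t * P s t" .
  qed simp
  finally show ?thesis .
qed

lemma rows: "s \<in> S \<Longrightarrow> (\<Sum>t\<in>S. P s t) = 1"
proof -
  assume s: "s \<in> S"
  have "(\<Sum>t\<in>S. P s t) = (\<Sum>\<rho>\<in>Rs s. (\<lambda>_. 1) (snd (snd \<rho>)) * real (weight A \<rho>) / out_weight A s)"
    using group_targets[OF s, of "\<lambda>_. 1"] by simp
  also have "\<dots> = (\<Sum>\<rho>\<in>Rs s. real (weight A \<rho>)) / out_weight A s"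
    by (simp add: sum_divide_distrib)
  also have "\<dots> = out_weight A s / out_weight A s"
    unfolding out_weight_def by simp
  also have "\<dots> = 1" using out_pos[OF s] by simp
  finally show ?thesis .
qed

lemma zero_prop:
  assumes nn: "\<And>s. s \<in> S \<Longrightarrow> f s \<ge> 0" and inv: "\<And>t. t \<in> S \<Longrightarrow> f t = (\<Sum>s\<in>S. f s * P s t)"
    and s0: "s0 \<in> S" "f s0 = 0" and x: "x \<in> S"
  shows "f x = 0"
proof -
  have "(x, s0) \<in> R\<^sup>*" using conn x s0 by simp
  thus ?thesis using x
  proof (induction rule: converse_rtrancl_induct)
    case base then show ?case using s0 by simp
  next
    case (step x y)
    from step(1) obtain \<kappa> where r: "x \<in> S" "(x, \<kappa>, y) \<in> rules A" unfolding R_def by auto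
    have y: "y \<in> S" using closed r by blast
    have "f y = 0" using step y by simp
    hence "(\<Sum>s\<in>S. f s * P s y) = 0" using inv[OF y] by simp
    hence "\<forall>s\<in>S. f s * P s y = 0"
      using sum_nonneg_eq_0_iff[OF finite_S, of "\<lambda>s. f s * P s y"] nn P_nonneg by auto
    hence "f x * P x y = 0" using r by blast
    thus ?case using CA_prob_pos[OF r(2)] by simp
  qed
qed

lemma invD:
  assumes "invariant_dist A S \<mu>"
  shows "\<And>s. s \<notin> S \<Longrightarrow> \<mu> s = 0" "\<And>s. s \<in> S \<Longrightarrow> \<mu> s \<ge> 0" "(\<Sum>s\<in>S. \<mu> s) = 1"
    "\<And>t. t \<in> S \<Longrightarrow> \<mu> t = (\<Sum>s\<in>S. \<mu> s * P s t)"
  using assms unfolding invariant_dist_def by blast+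

lemma inv_pos: "invariant_dist A S \<mu> \<Longrightarrow> s \<in> S \<Longrightarrow> \<mu> s > 0"
proof (rule ccontr)
  assume mu: "invariant_dist A S \<mu>" and s: "s \<in> S" and "\<not> \<mu> s > 0"
  hence z: "\<mu> s = 0" using invD(2)[OF mu s] by linarith
  have "\<forall>x\<in>S. \<mu> x = 0" using zero_prop[of \<mu> s, OF invD(2)[OF mu] invD(4)[OF mu] s z] by blast
  hence "(\<Sum>s\<in>S. \<mu> s) = 0" by simp
  thus False using invD(3)[OF mu] by simp
qed

lemma inv_unique:
  assumes mu: "invariant_dist A S \<mu>" and nu: "invariant_dist A S \<nu>"
  shows "\<nu> = \<mu>"
proof -
  define c where "c = Min ((\<lambda>s. \<nu> s / \<mu> s) ` S)"
  have ne: "S \<noteq> {}" using S_props(1) .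
  have "c \<in> (\<lambda>s. \<nu> s / \<mu> s) ` S" unfolding c_def
    by (rule Min_in) (use finite_S ne in auto)
  then obtain s0 where s0: "s0 \<in> S" "c = \<nu> s0 / \<mu> s0" by blast
  have cle: "c \<le> \<nu> s / \<mu> s" if "s \<in> S" for s unfolding c_def using finite_S that by simp
  define f where "f s = \<nu> s - c * \<mu> s" for s
  have nn: "f s \<ge> 0" if "s \<in> S" for s
    using cle[OF that] inv_pos[OF mu that] unfolding f_def by (simp add: pos_le_divide_eq)
  have inv: "f t = (\<Sum>s\<in>S. f s * P s t)" if "t \<in> S" for t
  proof -
    have "(\<Sum>s\<in>S. f s * P s t) = (\<Sum>s\<in>S. \<nu> s * P s t) - c * (\<Sum>s\<in>S. \<mu> s * P s t)"
      unfolding f_def by (simp add: left_diff_distrib sum_subtractf sum_distrib_left mult.assoc)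
    also have "\<dots> = \<nu> t - c * \<mu> t" using invD(4)[OF mu that] invD(4)[OF nu that] by simp
    finally show ?thesis unfolding f_def by simp
  qed
  have f0: "f s0 = 0" using s0 inv_pos[OF mu s0(1)] unfolding f_def by simp
  have eq: "\<nu> s = c * \<mu> s" if "s \<in> S" for s
    using zero_prop[OF nn inv s0(1) f0 that] unfolding f_def by simp
  have "1 = (\<Sum>s\<in>S. \<nu> s)" using invD(3)[OF nu] by simp
  also have "\<dots> = (\<Sum>s\<in>S. c * \<mu> s)" using eq by (intro sum.cong) auto
  also have "\<dots> = c * (\<Sum>s\<in>S. \<mu> s)" by (simp add: sum_distrib_left)
  also have "\<dots> = c" using invD(3)[OF mu] by simp
  finally have c1: "c = 1" by simp
  show ?thesis
  proof
    fix s show "\<nu> s = \<mu> s"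
      using eq c1 invD(1)[OF mu] invD(1)[OF nu] by (cases "s \<in> S") auto
  qed
qed

lemma inv_exists: "\<exists>\<mu>. invariant_dist A S \<mu>"
proof -
  obtain x where x: "\<exists>s\<in>S. x s \<noteq> 0" "\<forall>t\<in>S. x t = (\<Sum>s\<in>S. x s * P s t)"
    using exists_left_fix[of S P, OF finite_S S_props(1) rows] by blast
  define y where "y t = (if t \<in> S then \<bar>x t\<bar> else 0)" for t
  have le: "y t \<le> (\<Sum>s\<in>S. y s * P s t)" if "t \<in> S" for t
  proof -
    have "y t = \<bar>\<Sum>s\<in>S. x s * P s t\<bar>" using x(2) that unfolding y_def by simp
    also have "\<dots> \<le> (\<Sum>s\<in>S. \<bar>x s * P s t\<bar>)" by (rule sum_abs)
    also have "\<dots> = (\<Sum>s\<in>S. y s * P s t)"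
      unfolding y_def using P_nonneg by (intro sum.cong) (auto simp: abs_mult)
    finally show ?thesis .
  qed
  have "(\<Sum>t\<in>S. (\<Sum>s\<in>S. y s * P s t)) = (\<Sum>s\<in>S. y s * (\<Sum>t\<in>S. P s t))"
    by (subst sum.swap) (simp add: sum_distrib_left)
  also have "\<dots> = (\<Sum>s\<in>S. y s)" using rows by simp
  finally have "(\<Sum>t\<in>S. (\<Sum>s\<in>S. y s * P s t) - y t) = 0" by (simp add: sum_subtractf)
  hence eqy: "\<forall>t\<in>S. (\<Sum>s\<in>S. y s * P s t) - y t = 0"
    using sum_nonneg_eq_0_iff[OF finite_S, of "\<lambda>t. (\<Sum>s\<in>S. y s * P s t) - y t"] le by auto
  define Y where "Y = (\<Sum>s\<in>S. y s)"
  have Ypos: "Y > 0"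
  proof -
    obtain s where s: "s \<in> S" "x s \<noteq> 0" using x(1) by blast
    have "y s \<le> Y" unfolding Y_def using finite_S s by (intro member_le_sum) (auto simp: y_def)
    moreover have "y s > 0" using s unfolding y_def by simp
    ultimately show ?thesis by simp
  qed
  define \<mu> where "\<mu> t = y t / Y" for t
  have "invariant_dist A S \<mu>"
    unfolding invariant_dist_def
  proof (intro conjI allI ballI impI)
    fix s assume "s \<notin> S" thus "\<mu> s = 0" unfolding \<mu>_def y_def by simp
  next
    fix s assume "s \<in> S" thus "\<mu> s \<ge> 0" unfolding \<mu>_def y_def using Ypos by simp
  next
    have "(\<Sum>s\<in>S. y s / Y) = (\<Sum>s\<in>S. y s) / Y" by (simp add: sum_divide_distrib)
    thus "(\<Sum>s\<in>S. \<mu> s) = 1" unfolding \<mu>_def using Ypos unfolding Y_def by simp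
  next
    fix t assume t: "t \<in> S"
    have "(\<Sum>s\<in>S. \<mu> s * P s t) = (\<Sum>s\<in>S. y s * P s t) / Y"
      unfolding \<mu>_def by (simp add: sum_divide_distrib)
    also have "\<dots> = \<mu> t" using eqy t unfolding \<mu>_def by simp
    finally show "\<mu> t = (\<Sum>s\<in>S. \<mu> s * P s t)" by simp
  qed
  thus ?thesis by blast
qed

lemma mu_inv: "invariant_dist A S (mu_S A S)"
  unfolding mu_S_def using inv_exists inv_unique by (metis theI)

end

context pv2 begin

lemma Z1:
  assumes neg: "trend A S 2 < 0"
  shows "\<forall>q\<in>S. \<exists>n r. Wn 1 q 1 n r 0"
proof (rule ccontr)
  assume "\<not> (\<forall>q\<in>S. \<exists>n r. Wn 1 q 1 n r 0)"
  then obtain q0 where q0: "q0 \<in> S" "\<And>n r. \<not> Wn 1 q0 1 n r 0" by blast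
  define D where "D t = {d. \<exists>n c. Wn c q0 0 n t d}" for t
  have Dnn: "d \<ge> 0" if "d \<in> D t" for d t
  proof (rule ccontr)
    assume "\<not> d \<ge> 0"
    from that obtain n c where w: "Wn c q0 0 n t d" unfolding D_def by blast
    obtain p n1 n2 where "Wn 0 q0 0 n1 p (0 - 1)" using first_passage[OF w] \<open>\<not> d \<ge> 0\<close> by auto
    from Wn_shift[OF this, of 1] have "Wn 1 q0 1 n1 p 0" by simp
    thus False using q0(2) by blast
  qed
  have Dne: "\<exists>d. d \<in> D t" if "t \<in> S" for t
  proof -
    have "(q0, t) \<in> R\<^sup>*" using conn q0(1) that by simp
    then obtain n d where "\<forall>h. h \<ge> int n + 1 \<longrightarrow> Wn 1 q0 h n t (h + d)" using path_walk by blast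
    hence "Wn 1 q0 (int n + 1) n t (int n + 1 + d)" by simp
    from Wn_shift[OF this, of "- (int n + 1)"] have "Wn (1 - (int n + 1)) q0 0 n t d" by simp
    thus ?thesis unfolding D_def by blast
  qed
  have Dstep: "d + \<kappa> 2 \<in> D t" if "d \<in> D s" "s \<in> S" "(s, \<kappa>, t) \<in> rules A" for d s \<kappa> t
  proof -
    from that(1) obtain n c where w: "Wn c q0 0 n s d" unfolding D_def by blast
    have "Wn (min c d) q0 0 n s d" using Wn_mono[OF w] by simp
    from Wn_snoc[OF this that(3) that(2)] have "Wn (min c d) q0 0 (Suc n) t (d + \<kappa> 2)" by simp
    thus ?thesis unfolding D_def by blast
  qed
  define L where "L t = (LEAST k::nat. int k \<in> D t)" for t
  have LD: "int (L t) \<in> D t" if t: "t \<in> S" for t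
  proof -
    obtain d where d: "d \<in> D t" using Dne[OF t] by blast
    hence "int (nat d) \<in> D t" using Dnn[OF d] by simp
    thus ?thesis unfolding L_def by (rule LeastI)
  qed
  have Lle: "int (L t) \<le> d" if "d \<in> D t" for d t
  proof -
    have "int (nat d) \<in> D t" using that Dnn[OF that] by simp
    hence "L t \<le> nat d" unfolding L_def by (rule Least_le)
    thus ?thesis using Dnn[OF that] by simp
  qed
  define pot where "pot t = real (L t)" for t
  have relax: "pot t - pot s \<le> real_of_int (\<kappa> 2)" if "s \<in> S" "(s, \<kappa>, t) \<in> rules A" for s \<kappa> t
  proof -
    have "int (L s) + \<kappa> 2 \<in> D t" using Dstep[OF LD[OF that(1)] that] .
    hence "int (L t) \<le> int (L s) + \<kappa> 2" by (rule Lle)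
    hence "real_of_int (int (L t)) \<le> real_of_int (int (L s) + \<kappa> 2)" by linarith
    thus ?thesis unfolding pot_def by simp
  qed
  define \<mu> where "\<mu> = mu_S A S"
  have mu: "invariant_dist A S \<mu>" unfolding \<mu>_def by (rule mu_inv)
  have inner: "(\<Sum>\<rho>\<in>Rs s. real_of_int (fst (snd \<rho>) 2) * real (weight A \<rho>) / out_weight A s)
       \<ge> (\<Sum>t\<in>S. pot t * P s t) - pot s" if s: "s \<in> S" for s
  proof -
    have "(\<Sum>\<rho>\<in>Rs s. real_of_int (fst (snd \<rho>) 2) * real (weight A \<rho>) / out_weight A s)
        \<ge> (\<Sum>\<rho>\<in>Rs s. (\<lambda>t. pot t - pot s) (snd (snd \<rho>)) * real (weight A \<rho>) / out_weight A s)"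
    proof (rule sum_mono)
      fix \<rho> assume r: "\<rho> \<in> Rs s"
      obtain a \<kappa> t where rr: "\<rho> = (a, \<kappa>, t)" by (cases \<rho>) auto
      have r2: "(s, \<kappa>, t) \<in> rules A" using r rr by auto
      have "pot t - pot s \<le> real_of_int (\<kappa> 2)" using relax[OF s r2] .
      hence "(pot t - pot s) * real (weight A \<rho>) \<le> real_of_int (\<kappa> 2) * real (weight A \<rho>)"
        by (rule mult_right_mono) simp
      hence "(pot t - pot s) * real (weight A \<rho>) / out_weight A s \<le> real_of_int (\<kappa> 2) * real (weight A \<rho>) / out_weight A s"
        using out_pos[OF s] by (simp add: divide_right_mono)
      thus "(\<lambda>t. pot t - pot s) (snd (snd \<rho>)) * real (weight A \<rho>) / out_weight A s
          \<le> real_of_int (fst (snd \<rho>) 2) * real (weight A \<rho>) / out_weight A s" using rr by simp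
    qed
    also have "(\<Sum>\<rho>\<in>Rs s. (\<lambda>t. pot t - pot s) (snd (snd \<rho>)) * real (weight A \<rho>) / out_weight A s)
        = (\<Sum>t\<in>S. (pot t - pot s) * P s t)" by (rule group_targets[OF s])
    also have "\<dots> = (\<Sum>t\<in>S. pot t * P s t) - pot s * (\<Sum>t\<in>S. P s t)"
      by (simp add: left_diff_distrib sum_subtractf sum_distrib_left)
    also have "\<dots> = (\<Sum>t\<in>S. pot t * P s t) - pot s" using rows[OF s] by simp
    finally show ?thesis .
  qed
  have "trend A S 2 \<ge> (\<Sum>s\<in>S. \<mu> s * ((\<Sum>t\<in>S. pot t * P s t) - pot s))"
    unfolding trend_def \<mu>_def[symmetric]
    by (intro sum_mono mult_left_mono inner invD(2)[OF mu]) auto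
  also have "(\<Sum>s\<in>S. \<mu> s * ((\<Sum>t\<in>S. pot t * P s t) - pot s))
      = (\<Sum>t\<in>S. pot t * (\<Sum>s\<in>S. \<mu> s * P s t)) - (\<Sum>s\<in>S. \<mu> s * pot s)"
  proof -
    have "(\<Sum>s\<in>S. \<mu> s * ((\<Sum>t\<in>S. pot t * P s t) - pot s))
        = (\<Sum>s\<in>S. \<Sum>t\<in>S. \<mu> s * (pot t * P s t)) - (\<Sum>s\<in>S. \<mu> s * pot s)"
      by (simp only: right_diff_distrib sum_subtractf sum_distrib_left)
    also have "(\<Sum>s\<in>S. \<Sum>t\<in>S. \<mu> s * (pot t * P s t)) = (\<Sum>t\<in>S. \<Sum>s\<in>S. \<mu> s * (pot t * P s t))"
      by (rule sum.swap)
    also have "\<dots> = (\<Sum>t\<in>S. pot t * (\<Sum>s\<in>S. \<mu> s * P s t))"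
      by (simp only: sum_distrib_left) (simp only: mult.left_commute)
    finally show ?thesis .
  qed
  also have "\<dots> = (\<Sum>t\<in>S. pot t * \<mu> t) - (\<Sum>s\<in>S. \<mu> s * pot s)"
    using invD(4)[OF mu] by (metis (no_types, lifting) sum.cong)
  also have "\<dots> = 0" by (simp add: mult.commute)
  finally show False using neg by simp
qed

end

lemma bscc_D:
  assumes "is_bscc V E C"
  shows "C \<noteq> {}" "C \<subseteq> V" "\<And>x y. x \<in> C \<Longrightarrow> y \<in> C \<Longrightarrow> (x, y) \<in> (E \<inter> V \<times> V)\<^sup>*"
    "\<And>x y. x \<in> C \<Longrightarrow> y \<in> V \<Longrightarrow> (x, y) \<in> E \<Longrightarrow> y \<in> C"
  using assms unfolding is_bscc_def by auto

lemma bscc_closed_path: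
  assumes C: "is_bscc V E C" and x: "x \<in> C" and p: "(x, y) \<in> (E \<inter> V \<times> V)\<^sup>*"
  shows "y \<in> C"
  using p
proof (induction rule: rtrancl_induct)
  case base then show ?case using x .
next
  case (step y z) then show ?case using bscc_D(4)[OF C] by blast
qed

lemma bscc_meet_eq:
  assumes C1: "is_bscc V E C1" and C2: "is_bscc V E C2" and z: "z \<in> C1" "z \<in> C2"
  shows "C1 = C2"
proof
  show "C1 \<subseteq> C2"
  proof
    fix y assume "y \<in> C1"
    hence "(z, y) \<in> (E \<inter> V \<times> V)\<^sup>*" using bscc_D(3)[OF C1] z by blast
    thus "y \<in> C2" using bscc_closed_path[OF C2 z(2)] by blast
  qed
next
  show "C2 \<subseteq> C1"
  proof
    fix y assume "y \<in> C2"
    hence "(z, y) \<in> (E \<inter> V \<times> V)\<^sup>*" using bscc_D(3)[OF C2] z by blast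
    thus "y \<in> C1" using bscc_closed_path[OF C1 z(1)] by blast
  qed
qed

lemma bscc_exists:
  assumes fin: "finite V" and ne: "V \<noteq> {}"
  shows "\<exists>C. is_bscc V E C"
proof -
  let ?E = "E \<inter> V \<times> V"
  define Re where "Re x = {y \<in> V. (x, y) \<in> ?E\<^sup>*}" for x
  obtain x0 where "x0 \<in> V" using ne by blast
  obtain x where x: "x \<in> V" "\<forall>y. y \<in> V \<longrightarrow> card (Re x) \<le> card (Re y)"
    using ex_has_least_nat[of "\<lambda>x. x \<in> V" x0 "\<lambda>x. card (Re x)"] \<open>x0 \<in> V\<close> by blast
  have finR: "\<And>y. finite (Re y)" using fin unfolding Re_def by simp
  have bk: "(y, x) \<in> ?E\<^sup>*" if y: "y \<in> Re x" for y
  proof -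
    have yV: "y \<in> V" using y unfolding Re_def by simp
    have sub: "Re y \<subseteq> Re x" using y unfolding Re_def by (auto intro: rtrancl_trans)
    have "card (Re x) \<le> card (Re y)" using x(2) yV by blast
    hence "Re y = Re x" using sub finR by (meson card_seteq)
    moreover have "x \<in> Re x" using x(1) unfolding Re_def by simp
    ultimately show ?thesis unfolding Re_def by blast
  qed
  have "is_bscc V E (Re x)"
    unfolding is_bscc_def
  proof (intro conjI ballI impI)
    show "Re x \<noteq> {}" using x(1) unfolding Re_def by auto
    show "Re x \<subseteq> V" unfolding Re_def by auto
  next
    fix y z assume y: "y \<in> Re x" and z: "z \<in> Re x"
    have "(y, x) \<in> ?E\<^sup>*" using bk[OF y] .
    moreover have "(x, z) \<in> ?E\<^sup>*" using z unfolding Re_def by simp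
    ultimately show "(y, z) \<in> ?E\<^sup>*" by (rule rtrancl_trans)
  next
    fix y z assume y: "y \<in> Re x" and z: "z \<in> V" and e: "(y, z) \<in> E"
    have "(x, y) \<in> ?E\<^sup>*" "y \<in> V" using y unfolding Re_def by auto
    hence "(x, z) \<in> ?E\<^sup>*" using z e by (meson IntI mem_Sigma_iff rtrancl.rtrancl_into_rtrancl)
    thus "z \<in> Re x" using z unfolding Re_def by simp
  qed
  thus ?thesis by blast
qed

context pv2 begin

lemma Eg_closed:
  assumes C: "is_bscc S {(q, r). q \<in> S \<and> r \<in> S \<and> Gmat A S q r > 0} C"
    and x: "x \<in> C" and p: "(x, y) \<in> Eg\<^sup>*"
  shows "y \<in> C"
  using p
proof (induction rule: rtrancl_induct)
  case base then show ?case using x .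
next
  case (step y z)
  have yS: "y \<in> S" using step(3) bscc_D(2)[OF C] by blast
  from step(2) obtain n where w: "Wn 1 y 1 n z 0" unfolding Eg_def by auto
  have zS: "z \<in> S" using Wn_S[OF w yS] .
  have "Gmat A S y z > 0" using Eg_G step(2) by blast
  thus ?case using bscc_D(4)[OF C step(3) zS] yS zS by simp
qed

lemma unique_bscc:
  assumes neg: "trend A S 2 < 0"
    and C1: "is_bscc S {(q, r). q \<in> S \<and> r \<in> S \<and> Gmat A S q r > 0} C1"
    and C2: "is_bscc S {(q, r). q \<in> S \<and> r \<in> S \<and> Gmat A S q r > 0} C2"
  shows "C1 = C2"
proof -
  obtain q1 where q1: "q1 \<in> C1" using bscc_D(1)[OF C1] by blast
  obtain q2 where q2: "q2 \<in> C2" using bscc_D(1)[OF C2] by blast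
  have q1S: "q1 \<in> S" using q1 bscc_D(2)[OF C1] by blast
  have q2S: "q2 \<in> S" using q2 bscc_D(2)[OF C2] by blast
  obtain n d where nd: "d \<ge> - int n" "\<forall>h. h \<ge> int n + 1 \<longrightarrow> Wn 1 q1 h n q2 (h + d)"
    using path_walk[OF conn[OF q1S q2S]] by blast
  have w1: "Wn 1 q1 (int n + 1) n q2 (int n + 1 + d)" using nd(2) by simp
  define k where "k = nat (int n + d)"
  have kk: "int k + 1 = int n + 1 + d" using nd(1) unfolding k_def by simp
  obtain m r where w2: "Wn 1 q2 (int k + 1) m r 0" using Z_all[OF Z1[OF neg] q2S] by blast
  have w: "Wn 1 q1 (int n + 1) (n + m) r 0" using Wn_trans[OF w1] w2 kk by simp
  have "r \<in> C1" using Eg_closed[OF C1 q1 descent[OF w]] by simp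
  moreover have "r \<in> C2" using Eg_closed[OF C2 q2 descent[OF w2]] by simp
  ultimately show ?thesis using bscc_meet_eq[OF C1 C2] by blast
qed

end

theorem mainTheorem20:
  fixes A :: "'q pvass" and S :: "'q set"
  assumes "wf_pvass A" and "dim A = 2"
    and "is_bscc_CA A S"
    and "trend A S 2 < 0"
  shows "\<exists>!C. is_bscc S {(q, r). q \<in> S \<and> r \<in> S \<and> Gmat A S q r > 0} C"
proof -
  interpret pv A S using assms by unfold_locales
  obtain C where C: "is_bscc S {(q, r). q \<in> S \<and> r \<in> S \<and> Gmat A S q r > 0} C"
    using bscc_exists[OF finite_S S_props(1)] by blast
  show ?thesis
  proof (cases "\<exists>s\<in>S. \<exists>t\<in>S. s \<noteq> t")
    case True
    interpret pv2 A S using True by unfold_locales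
    show ?thesis using C unique_bscc[OF assms(4)] by blast
  next
    case False
    have "C' = C" if C': "is_bscc S {(q, r). q \<in> S \<and> r \<in> S \<and> Gmat A S q r > 0} C'" for C'
    proof -
      have all: "\<And>a b. a \<in> S \<Longrightarrow> b \<in> S \<Longrightarrow> a = b" using False by blast
      obtain a b where ab: "a \<in> C'" "b \<in> C" using bscc_D(1)[OF C'] bscc_D(1)[OF C] by blast
      have s1: "C' \<subseteq> S" "C \<subseteq> S" using bscc_D(2)[OF C'] bscc_D(2)[OF C] by auto
      have "C' = {a}" using all ab(1) s1(1) by blast
      moreover have "C = {b}" using all ab(2) s1(2) by blast
      moreover have "a = b" using all ab s1 by blast
      ultimately show ?thesis by simp
    qed
    thus ?thesis using C by blast
  qed
qed

end
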